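(* Let $\mathring B_1,\dots,\mathring B_k$ be open Euclidean balls in $\mathbb R^d$, let $B_j$ denote the closed ball with the same center and radius as $\mathring B_j$ ($j\in[k]$), and let $B_c$ be a closed Euclidean ball in $\mathbb R^d$. Let $P$ be a set of representative points of intersections with respect to the family $\{B_c,B_1,\dots,B_k\}$. For any subfamily $\{\mathring B_{i_1},\dots,\mathring B_{i_r}\}\subseteq\{\mathring B_1,\dots,\mathring B_k\}$, let $P'=\{x\in\mathbb R^d: x\in B_c \text{ and } x\notin\mathring B_j \text{ for all } j\in\{i_1,\dots,i_r\}\}$. If $P'\neq\emptyset$, then $P\cap P'\neq\emptyset$.
   Context: For a family of closed Euclidean balls in $\mathbb R^d$, denote by $S_j$ the boundary sphere of ball $j$. A set $P\subseteq\mathbb R^d$ is a set of representative points of intersections for the family if for every subfamily $F$ with $|F|\le d$: (i) if $\bigcap_{j\in F}S_j$ is connected, then $P$ contains a point of $\bigcap_{j\in F}S_j$; and (ii) if $\bigcap_{j\in F}S_j$ contains at most two points, then $P$ contains $\bigcap_{j\in F}S_j$. *)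

theory Defs
  imports "HOL-Analysis.Analysis"
begin

text \<open>A family of closed balls in the Euclidean space 'a (dimension DIM('a)) is given
  by an index set J, centers c and radii r; ball j is cball (c j) (r j), its boundary
  sphere is sphere (c j) (r j).\<close>

definition rep_points :: "'a::euclidean_space set \<Rightarrow> 'i set \<Rightarrow> ('i \<Rightarrow> 'a) \<Rightarrow> ('i \<Rightarrow> real) \<Rightarrow> bool" where
  "rep_points P J c r \<longleftrightarrow>
     (\<forall>F. F \<subseteq> J \<and> F \<noteq> {} \<and> finite F \<and> card F \<le> DIM('a) \<longrightarrow>
        ((\<Inter>j\<in>F. sphere (c j) (r j)) \<noteq> {} \<and> connected (\<Inter>j\<in>F. sphere (c j) (r j))
            \<longrightarrow> P \<inter> (\<Inter>j\<in>F. sphere (c j) (r j)) \<noteq> {})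
      \<and> (finite (\<Inter>j\<in>F. sphere (c j) (r j)) \<and> card (\<Inter>j\<in>F. sphere (c j) (r j)) \<le> 2
            \<longrightarrow> (\<Inter>j\<in>F. sphere (c j) (r j)) \<subseteq> P))"

end

theory Submission imports Defs "HOL-Analysis.Analysis" begin

lemma no3_card:
  assumes "\<And>x y z. x \<in> S \<Longrightarrow> y \<in> S \<Longrightarrow> z \<in> S \<Longrightarrow> x \<noteq> y \<Longrightarrow> y \<noteq> z \<Longrightarrow> x \<noteq> z \<Longrightarrow> False"
  shows "finite S \<and> card S \<le> 2"
proof (rule ccontr)
  assume "\<not> (finite S \<and> card S \<le> 2)"
  then obtain T where T: "T \<subseteq> S" "card T = 3"
    by (metis infinite_arbitrarily_large not_less_eq_eq numeral_2_eq_2 numeral_3_eq_3 obtain_subset_with_card_n)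
  then obtain x y z where "T = {x,y,z}" "x\<noteq>y" "y\<noteq>z" "x\<noteq>z" by (auto simp: card_3_iff)
  then show False using assms T by blast
qed

lemma sph_aff_fin:
  fixes A :: "'a::euclidean_space set"
  assumes "aff_dim A \<le> 1"
  shows "finite (sphere c r \<inter> A) \<and> card (sphere c r \<inter> A) \<le> 2"
proof (rule no3_card)
  fix x y z assume xyz: "x \<in> sphere c r \<inter> A" "y \<in> sphere c r \<inter> A" "z \<in> sphere c r \<inter> A"
    "x \<noteq> y" "y \<noteq> z" "x \<noteq> z"
  have "collinear A" using assms collinear_aff_dim by blast
  then have "collinear {x,y,z}" using xyz collinear_subset by (metis IntD2 empty_subsetI insert_subset)
  then have "between (y,z) x \<or> between (z,x) y \<or> between (x,y) z" by (simp add: collinear_between_cases)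
  moreover have False if "between (a,b) m" "m \<noteq> a" "m \<noteq> b" "dist c a = r" "dist c b = r" "dist c m = r" for a b m
  proof -
    have "m \<in> open_segment a b" using that by (simp add: between_mem_segment open_segment_def)
    then show False using dist_decreases_open_segment[of m a b c] that by auto
  qed
  ultimately show False using xyz by auto
qed

lemma sph_aff_conn:
  fixes A :: "'a::euclidean_space set"
  assumes "affine A" "aff_dim A \<noteq> 1"
  shows "connected (sphere c r \<inter> A)"
proof (cases "ball c r \<inter> A = {}")
  case True
  then have "sphere c r \<inter> A = cball c r \<inter> A" by (fastforce simp: less_eq_real_def)
  moreover have "convex (cball c r \<inter> A)" using assms affine_imp_convex convex_Int by blast
  ultimately show ?thesis using convex_connected by metis
next
  case False
  let ?S = "cball c r \<inter> A"
  have cv: "convex ?S" using assms affine_imp_convex convex_Int by blast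
  have ri: "rel_interior ?S = ball c r \<inter> A"
    using rel_interior_convex_Int_affine[of "cball c r" A] False assms by simp
  have cl: "closure ?S = ?S" using assms by (metis closed_Int closed_affine_hull closed_cball closure_closed hull_same)
  have rf: "rel_frontier ?S = sphere c r \<inter> A"
    unfolding rel_frontier_def ri cl by auto
  have "aff_dim (A \<inter> ball c r) = aff_dim A"
    using aff_dim_convex_Int_open[of A "ball c r"] False assms affine_imp_convex by auto
  moreover have "aff_dim (A \<inter> ball c r) \<le> aff_dim ?S" "aff_dim ?S \<le> aff_dim A"
    by (auto intro!: aff_dim_subset)
  ultimately have "aff_dim ?S \<noteq> 1" using assms by auto
  then show ?thesis using connected_sphere_gen[OF cv] rf by auto
qed

lemma sph_iff:
  fixes a b x y :: "'a::euclidean_space"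
  assumes "y \<in> sphere a ra" "y \<in> sphere b rb" "x \<in> sphere a ra"
  shows "x \<in> sphere b rb \<longleftrightarrow> (b - a) \<bullet> (x - y) = 0"
proof -
  have rb: "rb \<ge> 0" using assms(2) by auto
  have e1: "(dist b x)\<^sup>2 = (dist a x)\<^sup>2 - 2 * ((x - a) \<bullet> (b - a)) + (norm (b - a))\<^sup>2" for x
    unfolding dist_norm power2_norm_eq_inner by (simp add: algebra_simps inner_commute)
  have "x \<in> sphere b rb \<longleftrightarrow> (dist b x)\<^sup>2 = rb\<^sup>2"
    using rb by (simp add: power2_eq_iff_nonneg)
  also have "\<dots> \<longleftrightarrow> (dist b x)\<^sup>2 = (dist b y)\<^sup>2" using assms(2) by simp
  also have "\<dots> \<longleftrightarrow> (x - a) \<bullet> (b - a) = (y - a) \<bullet> (b - a)"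
    using e1[of x] e1[of y] assms(1,3) by auto
  also have "\<dots> \<longleftrightarrow> (b - a) \<bullet> (x - y) = 0" by (simp add: algebra_simps inner_commute)
  finally show ?thesis .
qed


lemma sph_reduce:
  fixes C :: "'i \<Rightarrow> 'a::euclidean_space" and R :: "'i \<Rightarrow> real"
  assumes "finite F" "j0 \<in> F" "y \<in> (\<Inter>j\<in>F. sphere (C j) (R j))"
  shows "\<exists>F0\<subseteq>F. F0 \<noteq> {} \<and> card F0 \<le> DIM('a) \<and> y \<in> (\<Inter>j\<in>F0. sphere (C j) (R j)) \<and>
     (((\<Inter>j\<in>F0. sphere (C j) (R j)) = (\<Inter>j\<in>F. sphere (C j) (R j)) \<and> connected (\<Inter>j\<in>F. sphere (C j) (R j)))
      \<or> (finite (\<Inter>j\<in>F0. sphere (C j) (R j)) \<and> card (\<Inter>j\<in>F0. sphere (C j) (R j)) \<le> 2))"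
proof -
  define v where "v j = C j - C j0" for j
  define Af where "Af H = {x. \<forall>j\<in>H. v j \<bullet> (x - y) = 0}" for H
  define SF where "SF H = (\<Inter>j\<in>H. sphere (C j) (R j))" for H
  have yF: "y \<in> sphere (C j) (R j)" if "j \<in> F" for j using assms(3) that by auto
  have SF_eq: "SF (insert j0 H) = sphere (C j0) (R j0) \<inter> Af H" if "H \<subseteq> F" for H
  proof -
    have "x \<in> sphere (C j) (R j) \<longleftrightarrow> v j \<bullet> (x - y) = 0" if "j \<in> H" "x \<in> sphere (C j0) (R j0)" for j x
      unfolding v_def using sph_iff[OF yF[OF assms(2)] yF, of j x] that \<open>H \<subseteq> F\<close> by auto
    then show ?thesis unfolding SF_def Af_def by auto
  qed
  obtain B where B: "B \<subseteq> v ` F" "independent B" "v ` F \<subseteq> span B"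
    using maximal_independent_subset by blast
  obtain G where G: "G \<subseteq> F" "inj_on v G" "B = v ` G"
    using B(1) subset_image_inj by metis
  have orth_span: "(\<forall>w\<in>span S. orthogonal w z) \<longleftrightarrow> (\<forall>w\<in>S. orthogonal w z)" for S z
  proof
    assume "\<forall>w\<in>S. orthogonal w z"
    then have "S \<subseteq> {w. orthogonal z w}" by (auto simp: orthogonal_commute)
    then have "span S \<subseteq> {w. orthogonal z w}"
      using span_minimal subspace_orthogonal_to_vector by blast
    then show "\<forall>w\<in>span S. orthogonal w z" by (auto simp: orthogonal_commute)
  qed (auto intro: span_base)
  have AfGF: "Af G = Af F"
  proof
    show "Af F \<subseteq> Af G" using G(1) unfolding Af_def by auto
    show "Af G \<subseteq> Af F"
    proof
      fix x assume "x \<in> Af G"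
      then have "\<forall>w\<in>B. orthogonal w (x - y)" unfolding Af_def G(3) orthogonal_def by auto
      then have "\<forall>w\<in>span B. orthogonal w (x - y)" using orth_span by blast
      then show "x \<in> Af F" using B(3) unfolding Af_def orthogonal_def by auto
    qed
  qed
  have cardG: "card G \<le> DIM('a)"
    using independent_bound[OF B(2)] G card_image by metis
  have affdim: "affine (Af H) \<and> aff_dim (Af H) = int DIM('a) - int (card H)" if "H \<subseteq> G" for H
  proof -
    define N where "N = {z. \<forall>w\<in>v ` H. orthogonal w z}"
    have sN: "subspace N" unfolding N_def by (rule subspace_orthogonal_to_vectors)
    have AN: "Af H = (+) y ` N"
    proof -
      have "x \<in> Af H \<longleftrightarrow> x - y \<in> N" for x unfolding Af_def N_def orthogonal_def by auto
      then show ?thesis by (force simp: image_iff)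
    qed
    have "dim {z \<in> UNIV. \<forall>w \<in> span (v ` H). orthogonal w z} + dim (span (v ` H)) = dim (UNIV::'a set)"
      by (rule dim_subspace_orthogonal_to_vectors) auto
    moreover have "{z \<in> UNIV. \<forall>w \<in> span (v ` H). orthogonal w z} = N"
      unfolding N_def using orth_span by auto
    moreover have "dim (span (v ` H)) = card H"
    proof -
      have "independent (v ` H)" using B(2) G(3) that independent_mono image_mono by metis
      then have "dim (v ` H) = card (v ` H)" by (rule dim_eq_card_independent)
      also have "\<dots> = card H" using G(2) that card_image inj_on_subset by metis
      finally show ?thesis by simp
    qed
    ultimately have "dim N + card H = DIM('a)" by simp
    moreover have "aff_dim (Af H) = int (dim N)"
      unfolding AN aff_dim_translation_eq using aff_dim_subspace[OF sN] .
    moreover have "affine (Af H)"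
      unfolding AN using affine_translation subspace_imp_affine[OF sN] by blast
    ultimately show ?thesis by simp
  qed
  define G' where "G' = (if card G < DIM('a) then G else G - {SOME g. g \<in> G})"
  have G'G: "G' \<subseteq> G" unfolding G'_def by auto
  have cardG': "card G' \<le> DIM('a) - 1 \<and> (G' \<noteq> G \<longrightarrow> card G' = DIM('a) - 1)"
  proof (cases "card G < DIM('a)")
    case True then show ?thesis unfolding G'_def by auto
  next
    case False
    then have "card G = DIM('a)" using cardG by auto
    then have "G \<noteq> {}" using DIM_positive[where 'a='a] by auto
    then have "(SOME g. g \<in> G) \<in> G" by (simp add: some_in_eq)
    moreover have "finite G" using G(1) assms(1) finite_subset by blast
    ultimately show ?thesis unfolding G'_def using False \<open>card G = DIM('a)\<close> by auto
  qed
  define F0 where "F0 = insert j0 G'"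
  have F0F: "F0 \<subseteq> F" unfolding F0_def using G'G G(1) assms(2) by auto
  have finG': "finite G'" using G'G G(1) assms(1) finite_subset by metis
  have cardF0: "card F0 \<le> DIM('a)"
    unfolding F0_def using card_insert_le_m1[of "DIM('a)" G' j0] cardG' DIM_positive by auto
  have yF0: "y \<in> SF F0" using F0F assms(3) unfolding SF_def by auto
  have SF0: "SF F0 = sphere (C j0) (R j0) \<inter> Af G'" unfolding F0_def using SF_eq G'G G(1) by auto
  have SFF: "SF F = sphere (C j0) (R j0) \<inter> Af G"
    using SF_eq[of F] AfGF assms(2) by (simp add: insert_absorb)
  have ad: "affine (Af G')" "aff_dim (Af G') = int DIM('a) - int (card G')" using affdim[OF G'G] by auto
  show ?thesis
  proof (cases "aff_dim (Af G') = 1")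
    case True
    then have "finite (SF F0) \<and> card (SF F0) \<le> 2" unfolding SF0 using sph_aff_fin[of "Af G'"] by simp
    then show ?thesis using F0F cardF0 yF0 unfolding SF_def F0_def by blast
  next
    case False
    then have "G' = G" using cardG' ad(2) DIM_positive[where 'a='a] by (auto simp: of_nat_diff)
    then have "SF F0 = SF F" "connected (SF F)" using SF0 SFF sph_aff_conn[OF ad(1) False] by auto
    then show ?thesis using F0F cardF0 yF0 unfolding SF_def F0_def by blast
  qed
qed


lemma clopen_conn:
  assumes "connected S" "open U" "closed K" "S \<inter> U = S \<inter> K" "S \<inter> K \<noteq> {}"
  shows "S \<subseteq> K"
proof -
  have "openin (top_of_set S) (S \<inter> K)" using assms(2,4) openin_open_Int by (metis inf_commute)
  moreover have "closedin (top_of_set S) (S \<inter> K)" using assms(3) closedin_closed_Int by blast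
  ultimately have "S \<inter> K = S" using assms(1,5) connected_clopen by blast
  then show ?thesis by blast
qed

theorem lemma3:
  fixes c :: "nat \<Rightarrow> 'a::euclidean_space" and r :: "nat \<Rightarrow> real"
    and cc :: 'a and rc :: real and k :: nat and P :: "'a set" and I :: "nat set"
  assumes "rc > 0"
    and "\<And>j. j \<in> {1..k} \<Longrightarrow> r j > 0"
    and "rep_points P {0..k} (c(0 := cc)) (r(0 := rc))"
    and "I \<subseteq> {1..k}"
    and "{x \<in> cball cc rc. \<forall>j\<in>I. x \<notin> ball (c j) (r j)} \<noteq> {}"
  shows "P \<inter> {x \<in> cball cc rc. \<forall>j\<in>I. x \<notin> ball (c j) (r j)} \<noteq> {}"
proof -
  define C where "C = c(0 := cc)"
  define R where "R = r(0 := rc)"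
  define P' where "P' = {x \<in> cball cc rc. \<forall>j\<in>I. x \<notin> ball (c j) (r j)}"
  define SF where "SF H = (\<Inter>j\<in>H. sphere (C j) (R j))" for H
  define J where "J = insert 0 I"
  have I0: "0 \<notin> I" using assms(4) by auto
  have CI: "C j = c j" "R j = r j" if "j \<in> I" for j using that I0 unfolding C_def R_def by auto
  have C0: "C 0 = cc" "R 0 = rc" unfolding C_def R_def by auto
  have finJ: "finite J" unfolding J_def using assms(4) finite_subset by blast
  have J0k: "J \<subseteq> {0..k}" unfolding J_def using assms(4) by auto
  define Q where "Q = {F. F \<subseteq> J \<and> SF F \<inter> P' \<noteq> {}}"
  have finQ: "finite Q" unfolding Q_def using finJ by auto
  have "{} \<in> Q" unfolding Q_def SF_def P'_def using assms(5) by auto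
  then have "Max (card ` Q) \<in> card ` Q" using finQ by (intro Max_in) auto
  then obtain F where FQ: "F \<in> Q" and Fmax: "\<And>G. G \<in> Q \<Longrightarrow> card G \<le> card F"
    using finQ by (metis (no_types, lifting) Max_ge finite_imageI image_iff)
  have FJ: "F \<subseteq> J" and FP: "SF F \<inter> P' \<noteq> {}" using FQ unfolding Q_def by auto
  have finF: "finite F" using FJ finJ finite_subset by blast
  have maxF: "SF (insert j F) \<inter> P' = {}" if "j \<in> J" "j \<notin> F" for j
  proof (rule ccontr)
    assume "SF (insert j F) \<inter> P' \<noteq> {}"
    then have "insert j F \<in> Q" unfolding Q_def using FJ that by auto
    then show False using Fmax[of "insert j F"] finF that by auto
  qed
  define U where "U = (\<Inter>j\<in>I-F. {x. r j < dist (c j) x}) \<inter> (if 0 \<in> F then UNIV else ball cc rc)"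
  have openU: "open U" unfolding U_def
    using finJ J_def
    by (intro open_Int open_INT) (auto intro!: open_Collect_less continuous_intros)
  have closedP': "closed P'" unfolding P'_def
  proof -
    have "{x \<in> cball cc rc. \<forall>j\<in>I. x \<notin> ball (c j) (r j)} = cball cc rc \<inter> (\<Inter>j\<in>I. - ball (c j) (r j))" by auto
    then show "closed {x \<in> cball cc rc. \<forall>j\<in>I. x \<notin> ball (c j) (r j)}" by (auto intro!: closed_Int closed_INT)
  qed
  have eqU: "SF F \<inter> U = SF F \<inter> P'"
  proof (intro equalityI subsetI)
    fix x assume x: "x \<in> SF F \<inter> P'"
    have "r j < dist (c j) x" if "j \<in> I - F" for j
    proof -
      have "r j \<le> dist (c j) x" using x that unfolding P'_def by auto
      moreover have "x \<notin> sphere (c j) (r j)"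
        using maxF[of j] that x unfolding SF_def J_def using CI[of j] by auto
      ultimately show ?thesis by auto
    qed
    moreover have "dist cc x < rc" if "0 \<notin> F"
    proof -
      have "dist cc x \<le> rc" using x unfolding P'_def by auto
      moreover have "x \<notin> sphere cc rc"
        using maxF[of 0] that x unfolding SF_def J_def using C0 by auto
      ultimately show ?thesis by auto
    qed
    ultimately show "x \<in> SF F \<inter> U" using x unfolding U_def by auto
  next
    fix x assume x: "x \<in> SF F \<inter> U"
    have "x \<in> cball cc rc"
    proof (cases "0 \<in> F")
      case True then show ?thesis using x C0 unfolding SF_def by auto
    next
      case False then show ?thesis using x unfolding U_def by auto
    qed
    moreover have "x \<notin> ball (c j) (r j)" if "j \<in> I" for j
    proof (cases "j \<in> F")
      case True then show ?thesis using x CI[OF that] unfolding SF_def by auto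
    next
      case False then show ?thesis proof - have "r j < dist (c j) x" using x that False unfolding U_def by auto then show ?thesis by auto qed
    qed
    ultimately show "x \<in> SF F \<inter> P'" using x unfolding P'_def by auto
  qed
  have "F \<noteq> {}"
  proof
    assume "F = {}"
    then have "SF F = UNIV" unfolding SF_def by auto
    then have "UNIV \<subseteq> P'" using clopen_conn[OF _ openU closedP' eqU FP] by auto
    moreover have "bounded P'" unfolding P'_def by (rule bounded_subset[OF bounded_cball]) auto
    ultimately show False using not_bounded_UNIV bounded_subset by blast
  qed
  then obtain j0 where "j0 \<in> F" by auto
  from FP obtain y where y: "y \<in> SF F" "y \<in> P'" by auto
  obtain F0 where F0: "F0 \<subseteq> F" "F0 \<noteq> {}" "card F0 \<le> DIM('a)" "y \<in> SF F0"
    "(SF F0 = SF F \<and> connected (SF F)) \<or> (finite (SF F0) \<and> card (SF F0) \<le> 2)"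
    using sph_reduce[OF finF \<open>j0 \<in> F\<close>, of y C R] y unfolding SF_def by blast
  have F0k: "F0 \<subseteq> {0..k}" "finite F0" using F0(1) FJ J0k finF finite_subset by blast+
  have rp: "(SF F0 \<noteq> {} \<and> connected (SF F0) \<longrightarrow> P \<inter> SF F0 \<noteq> {}) \<and>
            (finite (SF F0) \<and> card (SF F0) \<le> 2 \<longrightarrow> SF F0 \<subseteq> P)"
    using assms(3) F0k F0(2,3) unfolding rep_points_def SF_def C_def R_def by blast
  show ?thesis
  proof (cases "SF F0 = SF F \<and> connected (SF F)")
    case True
    then have "SF F \<subseteq> P'" using clopen_conn[OF _ openU closedP' eqU FP] by auto
    moreover have "P \<inter> SF F \<noteq> {}" using rp True y by auto
    ultimately show ?thesis unfolding P'_def by blast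
  next
    case False
    then have "SF F0 \<subseteq> P" using rp F0(5) by auto
    then show ?thesis using y F0(4) unfolding P'_def by blast
  qed
qed
end
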